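(* Assume the combination is perfect, and let $l$ be such that the indices $l_{\pm a}$, $\bar l_{\pm b}$ involved exist. Then: (1) $Q^{(l)}_{+a}=\sum_{a'}A^{(l)}_{+a,a'}w_{1,a'}$ is the linear form of the unique polynomials with $\deg A^{(l)}_{+a,a'}\le(\vec\nu_1(l-1)+\vec e_{1,a})_{a'}-1$, $A^{(l)}_{+a,a}$ monic of degree $\nu_{1,a}(l-1)$, and $\int Q^{(l)}_{+a}w_{2,b}x^kd\mu=0$ for $0\le k\le\nu_{2,b}(l-1)-1$, $b=1,\dots,p_2$ (type II normalized mixed multiple orthogonal system for $[\vec\nu_1(l-1)+\vec e_{1,a};\vec\nu_2(l-1)]$). (2) $Q^{(l)}_{-b}=\sum_{a'}A^{(l)}_{-b,a'}w_{1,a'}$ is the linear form of the unique polynomials with $\deg A^{(l)}_{-b,a'}\le\nu_{1,a'}(l)-1$ and $\int Q^{(l)}_{-b}w_{2,b'}x^kd\mu=\delta_{b,b'}\delta_{k,\nu_{2,b}(l)-1}$ for $0\le k\le\nu_{2,b'}(l)-1$, $b'=1,\dots,p_2$ (type I normalized system for $[\vec\nu_1(l);\vec\nu_2(l)-\vec e_{2,b}]$). (3) $\bar Q^{(l)}_{+b}=\sum_{b'}\bar A^{(l)}_{+b,b'}w_{2,b'}$ is the linear form of the unique polynomials with $\deg\bar A^{(l)}_{+b,b'}\le(\vec\nu_2(l-1)+\vec e_{2,b})_{b'}-1$, $\bar A^{(l)}_{+b,b}$ monic of degree $\nu_{2,b}(l-1)$, and $\int\bar Q^{(l)}_{+b}w_{1,a}x^kd\mu=0$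 for $0\le k\le\nu_{1,a}(l-1)-1$, $a=1,\dots,p_1$ (type II system for $[\vec\nu_2(l-1)+\vec e_{2,b};\vec\nu_1(l-1)]$). (4) $\bar Q^{(l)}_{-a}=\sum_{b'}\bar A^{(l)}_{-a,b'}w_{2,b'}$ is the linear form of the unique polynomials with $\deg\bar A^{(l)}_{-a,b'}\le\nu_{2,b'}(l)-1$ and $\int\bar Q^{(l)}_{-a}w_{1,a'}x^kd\mu=\delta_{a,a'}\delta_{k,\nu_{1,a}(l)-1}$ for $0\le k\le\nu_{1,a'}(l)-1$, $a'=1,\dots,p_1$ (type I system for $[\vec\nu_2(l);\vec\nu_1(l)-\vec e_{1,a}]$).
   Context: Setting: $\mu$ finite Borel measure on an interval $\Delta$ with infinitely many support points, not changing sign; weights $w_{1,a}$ ($a\le p_1$), $w_{2,b}$ ($b\le p_2$) real integrable, not changing sign; compositions $\vec n_\ell\in\mathbb N^{p_\ell}$. Each $i\in\mathbb Z_+$ is uniquely $i=q|\vec n_\ell|+n_{\ell,1}+\dots+n_{\ell,a-1}+r$ ($0\le r<n_{\ell,a}$); $a_\ell(i)=a$, $k_\ell(i)=qn_{\ell,a}+r$. Degree vectors $\nu_{\ell,a}(i)=\#\{0\le j\le i:a_\ell(j)=a\}$, $\vec\nu_\ell(-1)=0$; $\vec e_{\ell,a}$ is the $a$-th unit vector of $\mathbb Z^{p_\ell}$. $\chi_{\ell,a}(x)$: semi-infinite vector with $i$-th entry $x^{k_\ell(i)}$ if $a_\ell(i)=a$, else $0$; $(i)$ = $i$-th entry, $[l]$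 = first $l$ entries. Moment matrix $g_{i,j}=\int x^{k_1(i)+k_2(j)}w_{1,a_1(i)}w_{2,a_2(j)}d\mu$, $g^{[l]}=(g_{i,j})_{i,j<l}$. Perfect: for $|\vec\nu_1|=|\vec\nu_2|+1$, nontrivial $A_a$ with $\deg A_a\le\nu_{1,a}-1$ and $\int\sum_aA_aw_{1,a}w_{2,b}x^jd\mu=0$ ($j<\nu_{2,b}$, all $b$) force $\deg A_a=\nu_{1,a}-1$ for all $a$; then all $\det g^{[l]}\neq0$. $l_{+a}$ ($l_{-a}$) is the smallest (largest) integer $\ge l$ ($\le l$) with $a_1=a$; $\bar l_{\pm b}$ likewise with $a_2=b$. Associated polynomials: $A^{(l)}_{+a,a'}(y)=\chi_{1,a'}^{(l_{+a})}(y)-(g_{l_{+a},0},\dots,g_{l_{+a},l-1})(g^{[l]})^{-1}\chi_{1,a'}^{[l]}(y)$; $\bar A^{(l)}_{-a,b'}(x)=(\chi_{2,b'}^{[l+1]}(x))^\top(g^{[l+1]})^{-1}e_{l_{-a}}$; $A^{(l)}_{-b,a'}(y)=e_{\bar l_{-b}}^\top(g^{[l+1]})^{-1}\chi_{1,a'}^{[l+1]}(y)$; $\bar A^{(l)}_{+b,b'}(x)=\chi_{2,b'}^{(\bar l_{+b})}(x)-(\chi_{2,b'}^{[l]}(x))^\top(g^{[l]})^{-1}(g_{0,\bar l_{+b}},\dots,g_{l-1,\bar l_{+b}})^\top$ ($e_j$ canonical basis vectors of $\mathbb R^{l+1}$). *)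

theory Defs
  imports "HOL-Analysis.Analysis" "HOL-Computational_Algebra.Polynomial"
          "Jordan_Normal_Form.Gauss_Jordan_Elimination"
begin

(* Indices a of weights run over {0..<p} (the paper uses 1..p). *)

definition composition :: "(nat \<Rightarrow> nat) \<Rightarrow> nat \<Rightarrow> bool" where
  "composition n p \<longleftrightarrow> 1 \<le> p \<and> (\<forall>a<p. 0 < n a)"

definition csize :: "(nat \<Rightarrow> nat) \<Rightarrow> nat \<Rightarrow> nat" where
  "csize n p = (\<Sum>a<p. n a)"

text \<open>i = q|n| + n_0 + ... + n_(a-1) + r with 0 \<le> r < n_a; aidx gives a, kidx gives q n_a + r.\<close>
definition aidx :: "(nat \<Rightarrow> nat) \<Rightarrow> nat \<Rightarrow> nat \<Rightarrow> nat" where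
  "aidx n p i = (LEAST a. i mod csize n p < (\<Sum>j\<le>a. n j))"

definition kidx :: "(nat \<Rightarrow> nat) \<Rightarrow> nat \<Rightarrow> nat \<Rightarrow> nat" where
  "kidx n p i = (i div csize n p) * n (aidx n p i)
                + (i mod csize n p - (\<Sum>j<aidx n p i. n j))"

text \<open>nuv n p m a = nu_a(m - 1) = #{0 \<le> j \<le> m-1 : a(j) = a}; so nu(-1) = nuv n p 0 = 0.\<close>
definition nuv :: "(nat \<Rightarrow> nat) \<Rightarrow> nat \<Rightarrow> nat \<Rightarrow> nat \<Rightarrow> nat" where
  "nuv n p m a = card {j. j < m \<and> aidx n p j = a}"

definition unitv :: "nat \<Rightarrow> nat \<Rightarrow> nat" where
  "unitv a = (\<lambda>a'. if a' = a then 1 else 0)"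

definition chi :: "(nat \<Rightarrow> nat) \<Rightarrow> nat \<Rightarrow> nat \<Rightarrow> real \<Rightarrow> nat \<Rightarrow> real" where
  "chi n p a x i = (if aidx n p i = a then x ^ kidx n p i else 0)"

text \<open>Integration against the (sign-definite) measure d mu = sigma dM, sigma = +-1, M a positive measure.\<close>
definition mint :: "real \<Rightarrow> real measure \<Rightarrow> (real \<Rightarrow> real) \<Rightarrow> real" where
  "mint \<sigma> M f = \<sigma> * (\<integral>x. f x \<partial>M)"

definition msupport :: "real measure \<Rightarrow> real set" where
  "msupport M = {x. \<forall>e>0. emeasure M (ball x e) > 0}"

definition sign_definite :: "real measure \<Rightarrow> (real \<Rightarrow> real) \<Rightarrow> bool" where
  "sign_definite M w \<longleftrightarrow> (AE x in M. 0 \<le> w x) \<or> (AE x in M. w x \<le> 0)"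

definition gmom :: "real \<Rightarrow> real measure \<Rightarrow> (nat \<Rightarrow> nat) \<Rightarrow> nat \<Rightarrow> (nat \<Rightarrow> nat) \<Rightarrow> nat
     \<Rightarrow> (nat \<Rightarrow> real \<Rightarrow> real) \<Rightarrow> (nat \<Rightarrow> real \<Rightarrow> real) \<Rightarrow> nat \<Rightarrow> nat \<Rightarrow> real" where
  "gmom \<sigma> M n1 p1 n2 p2 w1 w2 i j =
     mint \<sigma> M (\<lambda>x. x ^ (kidx n1 p1 i + kidx n2 p2 j) * w1 (aidx n1 p1 i) x * w2 (aidx n2 p2 j) x)"

definition gtrunc :: "(nat \<Rightarrow> nat \<Rightarrow> real) \<Rightarrow> nat \<Rightarrow> real mat" where
  "gtrunc G l = mat l l (\<lambda>(i, j). G i j)"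

definition ginv :: "(nat \<Rightarrow> nat \<Rightarrow> real) \<Rightarrow> nat \<Rightarrow> real mat" where
  "ginv G l = the (mat_inverse (gtrunc G l))"

definition lplus :: "(nat \<Rightarrow> nat) \<Rightarrow> nat \<Rightarrow> nat \<Rightarrow> nat \<Rightarrow> nat" where
  "lplus n p l a = (LEAST m. l \<le> m \<and> aidx n p m = a)"

definition lminus :: "(nat \<Rightarrow> nat) \<Rightarrow> nat \<Rightarrow> nat \<Rightarrow> nat \<Rightarrow> nat" where
  "lminus n p l a = (GREATEST m. m \<le> l \<and> aidx n p m = a)"

definition linform :: "nat \<Rightarrow> (nat \<Rightarrow> real \<Rightarrow> real) \<Rightarrow> (nat \<Rightarrow> real poly) \<Rightarrow> real \<Rightarrow> real" where
  "linform p w A x = (\<Sum>a<p. poly (A a) x * w a x)"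

text \<open>Perfect combination (deg A \<le> m - 1 is rendered as: A = 0 or degree A < m).\<close>
definition perfect :: "real \<Rightarrow> real measure \<Rightarrow> nat \<Rightarrow> (nat \<Rightarrow> real \<Rightarrow> real) \<Rightarrow> nat
     \<Rightarrow> (nat \<Rightarrow> real \<Rightarrow> real) \<Rightarrow> bool" where
  "perfect \<sigma> M p1 w1 p2 w2 \<longleftrightarrow>
    (\<forall>(\<nu>1 :: nat \<Rightarrow> nat) (\<nu>2 :: nat \<Rightarrow> nat) (A :: nat \<Rightarrow> real poly).
       (\<Sum>a<p1. \<nu>1 a) = (\<Sum>b<p2. \<nu>2 b) + 1 \<and>
       (\<exists>a<p1. A a \<noteq> 0) \<and>
       (\<forall>a<p1. A a \<noteq> 0 \<longrightarrow> degree (A a) < \<nu>1 a) \<and>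
       (\<forall>b<p2. \<forall>j<\<nu>2 b. mint \<sigma> M (\<lambda>x. linform p1 w1 A x * w2 b x * x ^ j) = 0)
     \<longrightarrow> (\<forall>a<p1. 0 < \<nu>1 a \<longrightarrow> A a \<noteq> 0 \<and> degree (A a) = \<nu>1 a - 1))"

text \<open>Type II normalized mixed multiple orthogonal system for [nv + e_a; ev]
  (here nv' = nv + e_a is passed directly).\<close>
definition typeII :: "real \<Rightarrow> real measure \<Rightarrow> nat \<Rightarrow> (nat \<Rightarrow> real \<Rightarrow> real) \<Rightarrow> nat
     \<Rightarrow> (nat \<Rightarrow> real \<Rightarrow> real) \<Rightarrow> (nat \<Rightarrow> nat) \<Rightarrow> nat \<Rightarrow> (nat \<Rightarrow> nat) \<Rightarrow> (nat \<Rightarrow> real poly) \<Rightarrow> bool" where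
  "typeII \<sigma> M p w q v nv' a ev R \<longleftrightarrow>
     (\<forall>a'<p. R a' \<noteq> 0 \<longrightarrow> degree (R a') < nv' a') \<and>
     lead_coeff (R a) = 1 \<and> degree (R a) = nv' a - 1 \<and>
     (\<forall>b<q. \<forall>k<ev b. mint \<sigma> M (\<lambda>x. linform p w R x * v b x * x ^ k) = 0)"

text \<open>Type I normalized system for [nv; ev - e_b].\<close>
definition typeI :: "real \<Rightarrow> real measure \<Rightarrow> nat \<Rightarrow> (nat \<Rightarrow> real \<Rightarrow> real) \<Rightarrow> nat
     \<Rightarrow> (nat \<Rightarrow> real \<Rightarrow> real) \<Rightarrow> (nat \<Rightarrow> nat) \<Rightarrow> (nat \<Rightarrow> nat) \<Rightarrow> nat \<Rightarrow> (nat \<Rightarrow> real poly) \<Rightarrow> bool" where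
  "typeI \<sigma> M p w q v nv ev b R \<longleftrightarrow>
     (\<forall>a'<p. R a' \<noteq> 0 \<longrightarrow> degree (R a') < nv a') \<and>
     (\<forall>b'<q. \<forall>k<ev b'. mint \<sigma> M (\<lambda>x. linform p w R x * v b' x * x ^ k)
         = (if b' = b \<and> k = ev b - 1 then 1 else 0))"

definition Aplus :: "(nat \<Rightarrow> nat \<Rightarrow> real) \<Rightarrow> (nat \<Rightarrow> nat) \<Rightarrow> nat \<Rightarrow> nat \<Rightarrow> nat \<Rightarrow> nat \<Rightarrow> real \<Rightarrow> real" where
  "Aplus G n1 p1 l a a' y =
     chi n1 p1 a' y (lplus n1 p1 l a)
     - (\<Sum>i<l. \<Sum>j<l. G (lplus n1 p1 l a) j * ginv G l $$ (j, i) * chi n1 p1 a' y i)"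

definition Aminus :: "(nat \<Rightarrow> nat \<Rightarrow> real) \<Rightarrow> (nat \<Rightarrow> nat) \<Rightarrow> nat \<Rightarrow> (nat \<Rightarrow> nat) \<Rightarrow> nat
     \<Rightarrow> nat \<Rightarrow> nat \<Rightarrow> nat \<Rightarrow> real \<Rightarrow> real" where
  "Aminus G n1 p1 n2 p2 l b a' y =
     (\<Sum>j<Suc l. ginv G (Suc l) $$ (lminus n2 p2 l b, j) * chi n1 p1 a' y j)"

definition Abarplus :: "(nat \<Rightarrow> nat \<Rightarrow> real) \<Rightarrow> (nat \<Rightarrow> nat) \<Rightarrow> nat \<Rightarrow> nat \<Rightarrow> nat \<Rightarrow> nat \<Rightarrow> real \<Rightarrow> real" where
  "Abarplus G n2 p2 l b b' x =
     chi n2 p2 b' x (lplus n2 p2 l b)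
     - (\<Sum>i<l. \<Sum>j<l. chi n2 p2 b' x i * ginv G l $$ (i, j) * G j (lplus n2 p2 l b))"

definition Abarminus :: "(nat \<Rightarrow> nat \<Rightarrow> real) \<Rightarrow> (nat \<Rightarrow> nat) \<Rightarrow> nat \<Rightarrow> (nat \<Rightarrow> nat) \<Rightarrow> nat
     \<Rightarrow> nat \<Rightarrow> nat \<Rightarrow> nat \<Rightarrow> real \<Rightarrow> real" where
  "Abarminus G n1 p1 n2 p2 l a b' x =
     (\<Sum>i<Suc l. chi n2 p2 b' x i * ginv G (Suc l) $$ (i, lminus n1 p1 l a))"

end

theory Submission
  imports Defs "Jordan_Normal_Form.Determinant"
begin


abbreviation ss :: "(nat \<Rightarrow> nat) \<Rightarrow> nat \<Rightarrow> nat" where "ss n a \<equiv> (\<Sum>j<a. n j)"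

lemma ss_mono: "a \<le> b \<Longrightarrow> ss n a \<le> ss n b"
  by (rule sum_mono2) auto

lemma csize_pos: "composition n p \<Longrightarrow> 0 < csize n p"
proof -
  assume c: "composition n p"
  then have "0 < p" "0 < n 0" by (auto simp: composition_def)
  then have "n 0 \<le> ss n p" using member_le_sum[of 0 "{..<p}" n] by auto
  then show ?thesis using \<open>0 < n 0\<close> by (simp add: csize_def)
qed

lemma ss_Suc_le: "a < p \<Longrightarrow> ss n a + n a \<le> csize n p"
  unfolding csize_def using ss_mono[of "Suc a" p n] by simp

lemma aidx_char:
  assumes c: "composition n p"
  shows "aidx n p i = a \<longleftrightarrow> a < p \<and> ss n a \<le> i mod csize n p \<and> i mod csize n p < ss n a + n a"
proof -
  let ?r = "i mod csize n p"
  have cs: "0 < csize n p" using csize_pos[OF c] .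
  have r: "?r < csize n p" using cs by simp
  have sle: "(\<Sum>j\<le>a. n j) = ss n a + n a" for a by (simp add: lessThan_Suc_atMost[symmetric])
  have p1: "1 \<le> p" using c by (simp add: composition_def)
  have "{..p-1} = {..<p}" using p1 by auto
  then have ex: "?r < (\<Sum>j\<le>p - 1. n j)" using r by (simp add: csize_def)
  have uniq: "aidx n p i = a" if a: "a < p" "ss n a \<le> ?r" "?r < ss n a + n a" for a
  proof -
    have "(LEAST a. ?r < (\<Sum>j\<le>a. n j)) = a"
    proof (rule Least_equality)
      show "?r < (\<Sum>j\<le>a. n j)" using a by (simp add: sle)
      fix y assume "?r < (\<Sum>j\<le>y. n j)"
      then have "?r < ss n (Suc y)" by (simp add: sle)
      show "a \<le> y"
      proof (rule ccontr)
        assume "\<not> a \<le> y" then have "Suc y \<le> a" by simp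
        then have "ss n (Suc y) \<le> ss n a" by (rule ss_mono)
        with \<open>?r < ss n (Suc y)\<close> a show False by simp
      qed
    qed
    then show ?thesis by (simp add: aidx_def)
  qed
  have lt: "aidx n p i < p \<and> ss n (aidx n p i) \<le> ?r \<and> ?r < ss n (aidx n p i) + n (aidx n p i)"
  proof -
    let ?a = "aidx n p i"
    have A: "?r < (\<Sum>j\<le>?a. n j)" unfolding aidx_def by (rule LeastI[of "\<lambda>a. ?r < (\<Sum>j\<le>a. n j)", OF ex])
    have B: "\<And>y. ?r < (\<Sum>j\<le>y. n j) \<Longrightarrow> ?a \<le> y" unfolding aidx_def by (rule Least_le[of "\<lambda>a. ?r < (\<Sum>j\<le>a. n j)"])
    have "?a \<le> p - 1" using B[OF ex] .
    then have "?a < p" using p1 by simp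
    moreover have "ss n ?a \<le> ?r"
    proof (cases ?a)
      case 0 then show ?thesis by simp
    next
      case (Suc b)
      have "\<not> ?r < (\<Sum>j\<le>b. n j)" using B[of b] Suc by auto
      then show ?thesis using Suc by (simp add: sle)
    qed
    ultimately show ?thesis using A by (simp add: sle)
  qed
  show ?thesis
  proof
    assume "aidx n p i = a" then show "a < p \<and> ss n a \<le> ?r \<and> ?r < ss n a + n a" using lt by simp
  next
    assume "a < p \<and> ss n a \<le> ?r \<and> ?r < ss n a + n a" then show "aidx n p i = a" using uniq by blast
  qed
qed

lemma aidx_lt: "composition n p \<Longrightarrow> aidx n p i < p"
  using aidx_char by blast

lemma nuv_Suc: "nuv n p (Suc m) a = nuv n p m a + (if aidx n p m = a then 1 else 0)"
proof -
  have "{j. j < Suc m \<and> aidx n p j = a} = (if aidx n p m = a then insert m {j. j < m \<and> aidx n p j = a} else {j. j < m \<and> aidx n p j = a})"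
    by (auto simp: less_Suc_eq)
  then show ?thesis by (simp add: nuv_def)
qed

lemma nuv_mono: "m \<le> m' \<Longrightarrow> nuv n p m a \<le> nuv n p m' a"
  unfolding nuv_def by (rule card_mono) auto

definition FF :: "(nat \<Rightarrow> nat) \<Rightarrow> nat \<Rightarrow> nat \<Rightarrow> nat \<Rightarrow> nat" where
  "FF n p a i = (i div csize n p) * n a + min (n a) (i mod csize n p - ss n a)"

lemma FF_Suc:
  assumes c: "composition n p" and a: "a < p"
  shows "FF n p a (Suc i) = FF n p a i + (if aidx n p i = a then 1 else 0)"
proof -
  let ?cs = "csize n p" let ?r = "i mod ?cs" let ?q = "i div ?cs"
  have cs: "0 < ?cs" using csize_pos[OF c] .
  have r: "?r < ?cs" using cs by simp
  have na: "0 < n a" using c a by (simp add: composition_def)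
  have sa: "ss n a + n a \<le> ?cs" using ss_Suc_le[OF a] .
  have ch: "(aidx n p i = a) = (ss n a \<le> ?r \<and> ?r < ss n a + n a)" using aidx_char[OF c] a by blast
  show ?thesis
  proof (cases "Suc ?r = ?cs")
    case True
    then have m: "Suc i mod ?cs = 0" and d: "Suc i div ?cs = Suc ?q"
      using mod_Suc[of i ?cs] div_Suc[of i ?cs] by auto
    have "min (n a) (?r - ss n a) + (if aidx n p i = a then 1 else 0) = n a"
      using True ch na sa by (cases "aidx n p i = a") (auto simp: min_def)
    then show ?thesis unfolding FF_def m d by simp
  next
    case False
    then have m: "Suc i mod ?cs = Suc ?r" and d: "Suc i div ?cs = ?q"
      using mod_Suc[of i ?cs] div_Suc[of i ?cs] by auto
    have "min (n a) (Suc ?r - ss n a) = min (n a) (?r - ss n a) + (if aidx n p i = a then 1 else 0)"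
      using False ch na sa r by (cases "aidx n p i = a") (auto simp: min_def)
    then show ?thesis unfolding FF_def m d by simp
  qed
qed

lemma nuv_FF: "composition n p \<Longrightarrow> a < p \<Longrightarrow> nuv n p i a = FF n p a i"
proof (induction i)
  case 0 then show ?case by (simp add: nuv_def FF_def)
next
  case (Suc i) then show ?case by (simp add: nuv_Suc FF_Suc)
qed

lemma kidx_nuv:
  assumes c: "composition n p"
  shows "kidx n p i = nuv n p i (aidx n p i)"
proof -
  let ?a = "aidx n p i"
  have ch: "?a < p \<and> ss n ?a \<le> i mod csize n p \<and> i mod csize n p < ss n ?a + n ?a"
    using aidx_char[OF c] by blast
  then show ?thesis unfolding nuv_FF[OF c ch[THEN conjunct1]] FF_def kidx_def by auto
qed

lemma aidx_occ:
  assumes c: "composition n p" and a: "a < p"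
  shows "aidx n p (q * csize n p + ss n a) = a"
proof -
  have "ss n a < csize n p" using ss_Suc_le[OF a, of n] c a by (auto simp: composition_def)
  then have "(q * csize n p + ss n a) mod csize n p = ss n a" by simp
  then show ?thesis using aidx_char[OF c] a c by (auto simp: composition_def)
qed

lemma exists_occ:
  assumes c: "composition n p" and a: "a < p"
  shows "\<exists>m. l \<le> m \<and> aidx n p m = a"
proof -
  have "l * 1 \<le> l * csize n p" using csize_pos[OF c] by (intro mult_le_mono2) simp
  then have "l \<le> l * csize n p + ss n a" by linarith
  then show ?thesis using aidx_occ[OF c a, of l] by blast
qed

lemma kidx_bij:
  assumes c: "composition n p"
  shows "bij_betw (kidx n p) {i. i < m \<and> aidx n p i = a} {..<nuv n p m a}"
proof -
  let ?S = "{i. i < m \<and> aidx n p i = a}"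
  have k: "kidx n p i = nuv n p i a" if "i \<in> ?S" for i using that kidx_nuv[OF c] by auto
  have inj: "inj_on (kidx n p) ?S"
  proof (rule inj_onI)
    fix i j assume i: "i \<in> ?S" and j: "j \<in> ?S" and e: "kidx n p i = kidx n p j"
    have lt: "kidx n p x < kidx n p y" if "x \<in> ?S" "y \<in> ?S" "x < y" for x y
    proof -
      have "nuv n p x a < nuv n p (Suc x) a" using that by (simp add: nuv_Suc)
      also have "\<dots> \<le> nuv n p y a" using that by (intro nuv_mono) simp
      finally show ?thesis using k that by simp
    qed
    show "i = j" using lt[OF i j] lt[OF j i] e by (metis less_irrefl nat_neq_iff)
  qed
  have sub: "kidx n p ` ?S \<subseteq> {..<nuv n p m a}"
  proof
    fix y assume "y \<in> kidx n p ` ?S"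
    then obtain i where i: "i \<in> ?S" "y = kidx n p i" by auto
    have "nuv n p i a < nuv n p (Suc i) a" using i by (simp add: nuv_Suc)
    also have "\<dots> \<le> nuv n p m a" using i by (intro nuv_mono) simp
    finally show "y \<in> {..<nuv n p m a}" using k i by simp
  qed
  have "card (kidx n p ` ?S) = nuv n p m a" using card_image[OF inj] by (simp add: nuv_def)
  then have "kidx n p ` ?S = {..<nuv n p m a}" using sub by (intro card_subset_eq) auto
  then show ?thesis using inj by (simp add: bij_betw_def)
qed




lemma sum_nuv:
  assumes c: "composition n p"
  shows "(\<Sum>a<p. nuv n p m a) = m"
proof -
  have "(\<Sum>a<p. nuv n p m a) = (\<Sum>a<p. \<Sum>j<m. if aidx n p j = a then 1 else 0)"
    unfolding nuv_def by (intro sum.cong refl) (simp add: sum.If_cases Int_def conj_commute)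
  also have "\<dots> = (\<Sum>j<m. \<Sum>a<p. if aidx n p j = a then 1 else 0)" by (rule sum.swap)
  also have "\<dots> = (\<Sum>j<m. 1)" using aidx_lt[OF c] by (intro sum.cong refl) simp
  finally show ?thesis by simp
qed

lemma kidx_surj:
  assumes c: "composition n p" and "k < nuv n p m a"
  shows "\<exists>j<m. aidx n p j = a \<and> kidx n p j = k"
proof -
  have "k \<in> kidx n p ` {i. i < m \<and> aidx n p i = a}" using kidx_bij[OF c, of m a] assms(2)
    by (simp add: bij_betw_def)
  then show ?thesis by auto
qed

lemma kidx_lt_nuv:
  assumes c: "composition n p" and "j < m"
  shows "kidx n p j < nuv n p m (aidx n p j)"
  using kidx_bij[OF c, of m "aidx n p j"] assms(2) by (auto simp: bij_betw_def)

lemma nuv_const: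
  assumes "l \<le> L" "\<forall>j. l \<le> j \<and> j < L \<longrightarrow> aidx n p j \<noteq> a"
  shows "nuv n p L a = nuv n p l a"
proof -
  have "{j. j < L \<and> aidx n p j = a} = {j. j < l \<and> aidx n p j = a}"
  proof (rule Collect_cong)
    fix j show "(j < L \<and> aidx n p j = a) = (j < l \<and> aidx n p j = a)"
      using assms(1) assms(2)[rule_format, of j] by (cases "l \<le> j") auto
  qed
  then show ?thesis by (simp add: nuv_def)
qed

lemma lplus_props:
  assumes c: "composition n p" and a: "a < p"
  shows "l \<le> lplus n p l a \<and> aidx n p (lplus n p l a) = a \<and>
         (\<forall>j. l \<le> j \<and> j < lplus n p l a \<longrightarrow> aidx n p j \<noteq> a)"
proof -
  obtain m where m: "l \<le> m \<and> aidx n p m = a" using exists_occ[OF c a] by blast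
  have 1: "l \<le> lplus n p l a \<and> aidx n p (lplus n p l a) = a"
    unfolding lplus_def by (rule LeastI[of "\<lambda>m. l \<le> m \<and> aidx n p m = a", OF m])
  have 2: "\<And>j. l \<le> j \<and> aidx n p j = a \<Longrightarrow> lplus n p l a \<le> j"
    unfolding lplus_def by (rule Least_le)
  have 3: "\<forall>j. l \<le> j \<and> j < lplus n p l a \<longrightarrow> aidx n p j \<noteq> a"
  proof (intro allI impI notI)
    fix j assume j: "l \<le> j \<and> j < lplus n p l a" "aidx n p j = a"
    then have "lplus n p l a \<le> j" using 2 by blast
    then show False using j by simp
  qed
  show ?thesis using 1 3 by blast
qed

lemma lplus_kidx:
  assumes c: "composition n p" and a: "a < p"
  shows "kidx n p (lplus n p l a) = nuv n p l a"
  using lplus_props[OF c a, of l] kidx_nuv[OF c, of "lplus n p l a"] nuv_const[of l "lplus n p l a" n p a]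
  by simp

lemma lminus_props:
  assumes ex: "\<exists>m\<le>l. aidx n p m = b"
  shows "lminus n p l b \<le> l \<and> aidx n p (lminus n p l b) = b \<and>
         (\<forall>j. lminus n p l b < j \<and> j \<le> l \<longrightarrow> aidx n p j \<noteq> b)"
proof -
  obtain m where m: "m \<le> l \<and> aidx n p m = b" using ex by blast
  have 1: "lminus n p l b \<le> l \<and> aidx n p (lminus n p l b) = b"
    unfolding lminus_def by (rule GreatestI_nat[of "\<lambda>m. m \<le> l \<and> aidx n p m = b", OF m]) auto
  have 2: "\<And>j. j \<le> l \<and> aidx n p j = b \<Longrightarrow> j \<le> lminus n p l b"
    unfolding lminus_def by (rule Greatest_le_nat[of "\<lambda>m. m \<le> l \<and> aidx n p m = b"]) auto
  have 3: "\<forall>j. lminus n p l b < j \<and> j \<le> l \<longrightarrow> aidx n p j \<noteq> b"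
  proof (intro allI impI notI)
    fix j assume j: "lminus n p l b < j \<and> j \<le> l" "aidx n p j = b"
    then have "j \<le> lminus n p l b" using 2 by blast
    then show False using j by simp
  qed
  show ?thesis using 1 3 by blast
qed

lemma lminus_kidx:
  assumes c: "composition n p" and ex: "\<exists>m\<le>l. aidx n p m = b"
  shows "kidx n p (lminus n p l b) = nuv n p (Suc l) b - 1"
proof -
  let ?L = "lminus n p l b"
  note P = lminus_props[OF ex]
  have "nuv n p (Suc l) b = nuv n p (Suc ?L) b"
    using P by (intro nuv_const) auto
  also have "\<dots> = nuv n p ?L b + 1" using P by (simp add: nuv_Suc)
  finally show ?thesis using kidx_nuv[OF c, of ?L] P by simp
qed

definition polysS :: "(nat \<Rightarrow> nat) \<Rightarrow> nat \<Rightarrow> (nat \<Rightarrow> real) \<Rightarrow> nat set \<Rightarrow> nat \<Rightarrow> real poly" where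
  "polysS n p c I a = (\<Sum>i\<in>{i\<in>I. aidx n p i = a}. monom (c i) (kidx n p i))"

lemma poly_polysS:
  assumes "finite I"
  shows "poly (polysS n p c I a) y = (\<Sum>i\<in>I. c i * chi n p a y i)"
proof -
  have "poly (polysS n p c I a) y = (\<Sum>i\<in>{i\<in>I. aidx n p i = a}. c i * y ^ kidx n p i)"
    by (simp add: polysS_def poly_sum poly_monom)
  also have "\<dots> = (\<Sum>i\<in>I. c i * chi n p a y i)"
    unfolding sum.inter_filter[OF assms] chi_def by (intro sum.cong refl) simp
  finally show ?thesis .
qed

lemma linform_polysS:
  assumes c: "composition n p" and "finite I"
  shows "linform p w (polysS n p c I) x = (\<Sum>i\<in>I. c i * x ^ kidx n p i * w (aidx n p i) x)"
proof -
  have "linform p w (polysS n p c I) x = (\<Sum>a<p. \<Sum>i\<in>I. c i * chi n p a x i * w a x)"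
    unfolding linform_def poly_polysS[OF assms(2)] by (simp add: sum_distrib_right)
  also have "\<dots> = (\<Sum>i\<in>I. \<Sum>a<p. c i * chi n p a x i * w a x)" by (rule sum.swap)
  also have "\<dots> = (\<Sum>i\<in>I. c i * x ^ kidx n p i * w (aidx n p i) x)"
  proof (intro sum.cong refl)
    fix i assume "i \<in> I"
    have "(\<Sum>a<p. c i * chi n p a x i * w a x) = (\<Sum>a<p. if a = aidx n p i then c i * x ^ kidx n p i * w (aidx n p i) x else 0)"
      by (intro sum.cong refl) (auto simp: chi_def)
    also have "\<dots> = c i * x ^ kidx n p i * w (aidx n p i) x" using aidx_lt[OF c, of i] by simp
    finally show "(\<Sum>a<p. c i * chi n p a x i * w a x) = c i * x ^ kidx n p i * w (aidx n p i) x" .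
  qed
  finally show ?thesis .
qed

lemma coeff_polysS_zero:
  assumes "\<forall>i\<in>I. aidx n p i = a \<longrightarrow> kidx n p i < K" "K \<le> k"
  shows "coeff (polysS n p c I a) k = 0"
  using assms unfolding polysS_def coeff_sum by (intro sum.neutral) auto

lemma coeff_polysS:
  assumes c: "composition n p" and "i0 < m"
  shows "coeff (polysS n p c {..<m} (aidx n p i0)) (kidx n p i0) = c i0"
proof -
  let ?S = "{i\<in>{..<m}. aidx n p i = aidx n p i0}"
  have inj: "inj_on (kidx n p) {i. i < m \<and> aidx n p i = aidx n p i0}"
    using kidx_bij[OF c] by (auto simp: bij_betw_def)
  have "coeff (polysS n p c {..<m} (aidx n p i0)) (kidx n p i0) = (\<Sum>i\<in>?S. if i = i0 then c i else 0)"
    unfolding polysS_def coeff_sum coeff_monom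
    by (intro sum.cong refl) (use inj assms(2) in \<open>auto dest: inj_onD\<close>)
  also have "\<dots> = c i0" using assms(2) by simp
  finally show ?thesis .
qed

lemma poly_from_coeffs:
  assumes "\<forall>k\<ge>K. coeff q k = 0"
  shows "q = (\<Sum>k<K. monom (coeff q k) k)"
proof (rule poly_eqI)
  fix j
  show "coeff q j = coeff (\<Sum>k<K. monom (coeff q k) k) j"
    unfolding coeff_sum coeff_monom using assms by (cases "j < K") auto
qed

lemma represent:
  assumes c: "composition n p" and a: "a < p" and bnd: "\<forall>k\<ge>nuv n p m a. coeff q k = 0"
  shows "polysS n p (\<lambda>i. coeff q (kidx n p i)) {..<m} a = q"
proof -
  have "polysS n p (\<lambda>i. coeff q (kidx n p i)) {..<m} a
        = (\<Sum>i\<in>{i. i < m \<and> aidx n p i = a}. monom (coeff q (kidx n p i)) (kidx n p i))"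
    unfolding polysS_def by (intro sum.cong) auto
  also have "\<dots> = (\<Sum>k<nuv n p m a. monom (coeff q k) k)"
    by (rule sum.reindex_bij_betw[OF kidx_bij[OF c], of "\<lambda>k. monom (coeff q k) k"])
  also have "\<dots> = q" using poly_from_coeffs[OF bnd] by simp
  finally show ?thesis .
qed

lemma bnd_degree: "\<forall>k\<ge>K. coeff q k = 0 \<Longrightarrow> q \<noteq> 0 \<Longrightarrow> degree q < K"
  using leading_coeff_0_iff[of q] not_le by blast

lemma degree_bnd: "(q \<noteq> 0 \<longrightarrow> degree q < K) \<Longrightarrow> \<forall>k\<ge>K. coeff q k = 0"
proof (intro allI impI)
  fix k assume "q \<noteq> 0 \<longrightarrow> degree q < K" "K \<le> k"
  then show "coeff q k = 0" by (cases "q = 0") (auto intro: coeff_eq_0)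
qed

lemma diff_monic_bnd:
  assumes "lead_coeff q = 1" "lead_coeff r = 1" "degree q = K" "degree r = K"
  shows "\<forall>k\<ge>K. coeff (q - r) k = 0"
proof (intro allI impI)
  fix k assume k: "K \<le> k"
  show "coeff (q - r) k = 0"
  proof (cases "k = K")
    case True then show ?thesis using assms by simp
  next
    case False then have "degree q < k" "degree r < k" using k assms by auto
    then show ?thesis by (simp add: coeff_eq_0)
  qed
qed

lemma linform_diff: "linform p w (\<lambda>a. R a - P a) x = linform p w R x - linform p w P x"
  unfolding linform_def by (simp add: left_diff_distrib sum_subtractf)

lemma mint_diff: "integrable M f \<Longrightarrow> integrable M g \<Longrightarrow> mint \<sigma> M (\<lambda>x. f x - g x) = mint \<sigma> M f - mint \<sigma> M g"
  unfolding mint_def by (simp add: right_diff_distrib)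




lemma polysS_cong:
  "(\<And>i. i \<in> I \<Longrightarrow> aidx n p i = a \<Longrightarrow> c i = c' i) \<Longrightarrow> polysS n p c I a = polysS n p c' I a"
  unfolding polysS_def by (intro sum.cong) auto

lemma coeff_polysS_gen:
  "coeff (polysS n p c I a) k = (\<Sum>i\<in>{i\<in>I. aidx n p i = a}. if kidx n p i = k then c i else 0)"
  unfolding polysS_def coeff_sum coeff_monom by simp

lemma degree_eqI': "coeff q K \<noteq> 0 \<Longrightarrow> (\<forall>k>K. coeff q k = 0) \<Longrightarrow> degree q = K"
  by (meson antisym degree_le le_degree leD)

lemma matinv:
  fixes G :: "nat \<Rightarrow> nat \<Rightarrow> real"
  assumes ns: "\<forall>c. (\<forall>j<L. (\<Sum>i<L. c i * G i j) = 0) \<longrightarrow> (\<forall>i<L. c i = 0)"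
  shows "\<forall>i<L. \<forall>k<L. (\<Sum>j<L. ginv G L $$ (i,j) * G j k) = (if i = k then 1 else 0)"
    and "\<forall>i<L. \<forall>k<L. (\<Sum>j<L. G i j * ginv G L $$ (j,k)) = (if i = k then 1 else 0)"
proof -
  let ?A = "gtrunc G L"
  have A: "?A \<in> carrier_mat L L" unfolding gtrunc_def by simp
  have AT: "transpose_mat ?A \<in> carrier_mat L L" using A by simp
  have dA: "Determinant.det ?A \<noteq> 0"
  proof
    assume "Determinant.det ?A = 0"
    then have "Determinant.det (transpose_mat ?A) = 0" using det_transpose[OF A] by simp
    then obtain v where v: "v \<in> carrier_vec L" "v \<noteq> 0\<^sub>v L" "transpose_mat ?A *\<^sub>v v = 0\<^sub>v L"
      using det_0_iff_vec_prod_zero_field[OF AT] by blast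
    have "\<forall>j<L. (\<Sum>i<L. v $ i * G i j) = 0"
    proof (intro allI impI)
      fix j assume j: "j < L"
      have "(transpose_mat ?A *\<^sub>v v) $ j = 0" using v(3) j by simp
      moreover have "(transpose_mat ?A *\<^sub>v v) $ j = (\<Sum>i<L. v $ i * G i j)"
        using j A v(1) by (auto simp: scalar_prod_def gtrunc_def lessThan_atLeast0 intro!: sum.cong)
      ultimately show "(\<Sum>i<L. v $ i * G i j) = 0" by simp
    qed
    then have "\<forall>i<L. v $ i = 0" using ns by blast
    then have "v = 0\<^sub>v L" using v(1) by (intro eq_vecI) auto
    with v(2) show False by simp
  qed
  have U: "?A \<in> Units (ring_mat TYPE(real) L ())" by (rule det_non_zero_imp_unit[OF A dA])
  obtain B where B: "mat_inverse ?A = Some B"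
  proof (cases "mat_inverse ?A")
    case None
    then have "?A \<notin> Units (ring_mat TYPE(real) L ())" by (rule mat_inverse(1)[OF A])
    with U show ?thesis by simp
  next
    case (Some B) then show ?thesis using that by simp
  qed
  have BB: "?A * B = 1\<^sub>m L" "B * ?A = 1\<^sub>m L" "B \<in> carrier_mat L L"
    using mat_inverse(2)[OF A B] by auto
  have g: "ginv G L = B" unfolding ginv_def using B by simp
  show "\<forall>i<L. \<forall>k<L. (\<Sum>j<L. ginv G L $$ (i,j) * G j k) = (if i = k then 1 else 0)"
  proof (intro allI impI)
    fix i k assume ik: "i < L" "k < L"
    have "(B * ?A) $$ (i,k) = (\<Sum>j<L. B $$ (i,j) * G j k)"
      using ik A BB(3) by (auto simp: scalar_prod_def gtrunc_def lessThan_atLeast0 intro!: sum.cong)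
    then show "(\<Sum>j<L. ginv G L $$ (i,j) * G j k) = (if i = k then 1 else 0)"
      using BB(2) ik g by simp
  qed
  show "\<forall>i<L. \<forall>k<L. (\<Sum>j<L. G i j * ginv G L $$ (j,k)) = (if i = k then 1 else 0)"
  proof (intro allI impI)
    fix i k assume ik: "i < L" "k < L"
    have "(?A * B) $$ (i,k) = (\<Sum>j<L. G i j * B $$ (j,k))"
      using ik A BB(3) by (auto simp: scalar_prod_def gtrunc_def lessThan_atLeast0 intro!: sum.cong)
    then show "(\<Sum>j<L. G i j * ginv G L $$ (j,k)) = (if i = k then 1 else 0)"
      using BB(1) ik g by simp
  qed
qed

lemma sum_delta_r: "k < (L::nat) \<Longrightarrow> (\<Sum>t<L. f t * (if t = k then 1 else 0)) = (f k :: real)"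
proof -
  assume k: "k < L"
  have "(\<Sum>t<L. f t * (if t = k then 1 else 0)) = (\<Sum>t<L. if t = k then f t else 0)" by (intro sum.cong) auto
  then show ?thesis using k by simp
qed

lemma sum_delta_l: "k < (L::nat) \<Longrightarrow> (\<Sum>t<L. (if k = t then 1 else 0) * f t) = (f k :: real)"
proof -
  assume k: "k < L"
  have "(\<Sum>t<L. (if k = t then 1 else 0) * f t) = (\<Sum>t<L. if t = k then f t else 0)" by (intro sum.cong) auto
  then show ?thesis using k by simp
qed

lemma inv_unique:
  fixes X A Y :: "nat \<Rightarrow> nat \<Rightarrow> real"
  assumes l: "\<forall>i<L. \<forall>k<L. (\<Sum>t<L. X i t * A t k) = (if i = k then 1 else 0)"
    and r: "\<forall>i<L. \<forall>k<L. (\<Sum>t<L. A i t * Y t k) = (if i = k then 1 else 0)"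
    and ik: "i < L" "k < L"
  shows "X i k = Y i k"
proof -
  have "X i k = (\<Sum>t<L. X i t * (if t = k then 1 else 0))" using ik sum_delta_r by simp
  also have "\<dots> = (\<Sum>t<L. X i t * (\<Sum>s<L. A t s * Y s k))" using r ik by (intro sum.cong refl) simp
  also have "\<dots> = (\<Sum>t<L. \<Sum>s<L. X i t * A t s * Y s k)" by (simp add: sum_distrib_left mult.assoc)
  also have "\<dots> = (\<Sum>s<L. \<Sum>t<L. X i t * A t s * Y s k)" by (rule sum.swap)
  also have "\<dots> = (\<Sum>s<L. (\<Sum>t<L. X i t * A t s) * Y s k)" by (simp add: sum_distrib_right)
  also have "\<dots> = (\<Sum>s<L. (if i = s then 1 else 0) * Y s k)" using l ik by (intro sum.cong refl) simp
  also have "\<dots> = Y i k" using ik sum_delta_l by simp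
  finally show ?thesis .
qed

locale mmo0 =
  fixes \<sigma> :: real and M :: "real measure" and n1 :: "nat \<Rightarrow> nat" and p1 :: nat
    and n2 :: "nat \<Rightarrow> nat" and p2 :: nat and w1 w2 :: "nat \<Rightarrow> real \<Rightarrow> real"
  assumes comp1: "composition n1 p1" and comp2: "composition n2 p2"
    and moments: "\<forall>a<p1. \<forall>b<p2. \<forall>k. integrable M (\<lambda>x. x ^ k * w1 a x * w2 b x)"
begin

abbreviation "GG \<equiv> gmom \<sigma> M n1 p1 n2 p2 w1 w2"

lemma int_sum:
  assumes "finite I"
  shows "mint \<sigma> M (\<lambda>x. (\<Sum>i\<in>I. c i * x ^ kidx n1 p1 i * w1 (aidx n1 p1 i) x) * w2 (aidx n2 p2 j) x * x ^ kidx n2 p2 j)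
     = (\<Sum>i\<in>I. c i * GG i j)"
proof -
  let ?f = "\<lambda>i x. x ^ (kidx n1 p1 i + kidx n2 p2 j) * w1 (aidx n1 p1 i) x * w2 (aidx n2 p2 j) x"
  have eq: "(\<lambda>x. (\<Sum>i\<in>I. c i * x ^ kidx n1 p1 i * w1 (aidx n1 p1 i) x) * w2 (aidx n2 p2 j) x * x ^ kidx n2 p2 j)
      = (\<lambda>x. \<Sum>i\<in>I. c i * ?f i x)"
    by (rule ext) (simp add: sum_distrib_right sum_distrib_left power_add mult_ac)
  have int: "integrable M (?f i)" for i
    using moments aidx_lt[OF comp1] aidx_lt[OF comp2] by blast
  have "integral\<^sup>L M (\<lambda>x. \<Sum>i\<in>I. c i * ?f i x) = (\<Sum>i\<in>I. integral\<^sup>L M (\<lambda>x. c i * ?f i x))"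
    by (rule Bochner_Integration.integral_sum) (use int in auto)
  also have "\<dots> = (\<Sum>i\<in>I. c i * integral\<^sup>L M (?f i))" by simp
  finally have "mint \<sigma> M (\<lambda>x. \<Sum>i\<in>I. c i * ?f i x) = \<sigma> * (\<Sum>i\<in>I. c i * integral\<^sup>L M (?f i))"
    unfolding mint_def by simp
  also have "\<dots> = (\<Sum>i\<in>I. c i * GG i j)"
    unfolding gmom_def mint_def by (simp add: sum_distrib_left mult_ac)
  finally show ?thesis using eq by simp
qed

lemma integrable_lin:
  assumes b: "b < p2"
  shows "integrable M (\<lambda>x. linform p1 w1 R x * w2 b x * x ^ k)"
proof -
  have eq: "(\<lambda>x. linform p1 w1 R x * w2 b x * x ^ k) =
     (\<lambda>x. \<Sum>a<p1. \<Sum>i\<le>degree (R a). coeff (R a) i * (x ^ (i + k) * w1 a x * w2 b x))"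
    unfolding linform_def poly_altdef
    by (rule ext) (simp add: sum_distrib_right sum_distrib_left power_add mult_ac)
  show ?thesis unfolding eq using moments b by (intro Bochner_Integration.integrable_sum Bochner_Integration.integrable_mult_right) auto
qed

lemma linform_mint_diff:
  assumes b: "b < p2"
  shows "mint \<sigma> M (\<lambda>x. linform p1 w1 (\<lambda>a. R a - P a) x * w2 b x * x ^ k)
       = mint \<sigma> M (\<lambda>x. linform p1 w1 R x * w2 b x * x ^ k) - mint \<sigma> M (\<lambda>x. linform p1 w1 P x * w2 b x * x ^ k)"
proof -
  have "(\<lambda>x. linform p1 w1 (\<lambda>a. R a - P a) x * w2 b x * x ^ k) =
        (\<lambda>x. linform p1 w1 R x * w2 b x * x ^ k - linform p1 w1 P x * w2 b x * x ^ k)"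
    by (rule ext) (simp add: linform_diff left_diff_distrib)
  then show ?thesis using mint_diff[OF integrable_lin[OF b] integrable_lin[OF b]] by simp
qed

end

locale mmo = mmo0 +
  assumes nonsing: "\<forall>L c. (\<forall>j<L. (\<Sum>i<L. c i * GG i j) = 0) \<longrightarrow> (\<forall>i<L. c i = 0)"
begin

lemma ginv_id:
  shows "\<forall>i<L. \<forall>k<L. (\<Sum>j<L. ginv GG L $$ (i,j) * GG j k) = (if i = k then 1 else 0)"
    and "\<forall>i<L. \<forall>k<L. (\<Sum>j<L. GG i j * ginv GG L $$ (j,k)) = (if i = k then 1 else 0)"
  using matinv[of L GG] nonsing by blast+

lemma uniq:
  assumes bnd: "\<forall>a<p1. \<forall>k\<ge>nuv n1 p1 m a. coeff (D a) k = 0"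
    and orth: "\<forall>b<p2. \<forall>k<nuv n2 p2 m b. mint \<sigma> M (\<lambda>x. linform p1 w1 D x * w2 b x * x ^ k) = 0"
  shows "\<forall>a<p1. D a = 0"
proof -
  define c where "c i = coeff (D (aidx n1 p1 i)) (kidx n1 p1 i)" for i
  have rep: "polysS n1 p1 c {..<m} a = D a" if a: "a < p1" for a
  proof -
    have "polysS n1 p1 c {..<m} a = polysS n1 p1 (\<lambda>i. coeff (D a) (kidx n1 p1 i)) {..<m} a"
      by (rule polysS_cong) (simp add: c_def)
    also have "\<dots> = D a" using represent[OF comp1 a] bnd a by blast
    finally show ?thesis .
  qed
  have lin: "linform p1 w1 D x = (\<Sum>i<m. c i * x ^ kidx n1 p1 i * w1 (aidx n1 p1 i) x)" for x
  proof -
    have "linform p1 w1 D x = linform p1 w1 (polysS n1 p1 c {..<m}) x"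
      unfolding linform_def using rep by (intro sum.cong refl) simp
    then show ?thesis using linform_polysS[OF comp1] by simp
  qed
  have "\<forall>j<m. (\<Sum>i<m. c i * GG i j) = 0"
  proof (intro allI impI)
    fix j assume j: "j < m"
    have "(\<Sum>i<m. c i * GG i j) = mint \<sigma> M (\<lambda>x. linform p1 w1 D x * w2 (aidx n2 p2 j) x * x ^ kidx n2 p2 j)"
      unfolding lin using int_sum[of "{..<m}" c j] by simp
    also have "\<dots> = 0" using orth aidx_lt[OF comp2] kidx_lt_nuv[OF comp2 j] by blast
    finally show "(\<Sum>i<m. c i * GG i j) = 0" .
  qed
  then have c0: "\<forall>i<m. c i = 0" using nonsing by blast
  show ?thesis
  proof (intro allI impI)
    fix a assume a: "a < p1"
    have "D a = polysS n1 p1 c {..<m} a" using rep[OF a] by simp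
    also have "\<dots> = 0" unfolding polysS_def using c0 by (intro sum.neutral) auto
    finally show "D a = 0" .
  qed
qed

end




context mmo
begin

lemma part1:
  assumes a: "a < p1"
  shows "\<exists>P. (\<forall>a'<p1. poly (P a') = Aplus GG n1 p1 l a a')
        \<and> typeII \<sigma> M p1 w1 p2 w2 (\<lambda>a'. nuv n1 p1 l a' + unitv a a') a (nuv n2 p2 l) P
        \<and> (\<forall>R. typeII \<sigma> M p1 w1 p2 w2 (\<lambda>a'. nuv n1 p1 l a' + unitv a a') a (nuv n2 p2 l) R
               \<longrightarrow> (\<forall>a'<p1. R a' = P a'))"
proof -
  define L where "L = lplus n1 p1 l a"
  have LP: "l \<le> L" "aidx n1 p1 L = a" "kidx n1 p1 L = nuv n1 p1 l a"
    using lplus_props[OF comp1 a, of l] lplus_kidx[OF comp1 a, of l] unfolding L_def by auto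
  define B where "B = ginv GG l"
  define d where "d i = - (\<Sum>j<l. GG L j * B $$ (j, i))" for i
  define c where "c = d(L := 1)"
  define I where "I = insert L {..<l}"
  have LI: "L \<notin> {..<l}" using LP by simp
  have fI: "finite I" unfolding I_def by simp
  define P where "P = polysS n1 p1 c I"
  have cd: "c i = d i" if "i < l" for i using that LP unfolding c_def by auto
  let ?nv = "\<lambda>a'. nuv n1 p1 l a' + unitv a a'"
  have polyP: "poly (P a') = Aplus GG n1 p1 l a a'" for a'
  proof (rule ext)
    fix y
    have "poly (P a') y = c L * chi n1 p1 a' y L + (\<Sum>i<l. c i * chi n1 p1 a' y i)"
      unfolding P_def poly_polysS[OF fI] using LI by (simp add: I_def)
    also have "\<dots> = chi n1 p1 a' y L + (\<Sum>i<l. d i * chi n1 p1 a' y i)"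
      using cd by (simp add: c_def)
    also have "(\<Sum>i<l. d i * chi n1 p1 a' y i) = - (\<Sum>i<l. \<Sum>j<l. GG L j * B $$ (j, i) * chi n1 p1 a' y i)"
      unfolding d_def by (simp add: sum_distrib_right sum_negf)
    finally show "poly (P a') y = Aplus GG n1 p1 l a a' y"
      unfolding Aplus_def L_def B_def by simp
  qed
  have bndP: "\<forall>k\<ge>?nv a'. coeff (P a') k = 0" for a'
  proof (intro allI impI)
    fix k assume k: "?nv a' \<le> k"
    show "coeff (P a') k = 0" unfolding P_def
    proof (rule coeff_polysS_zero[OF _ k], intro ballI impI)
      fix i assume i: "i \<in> I" "aidx n1 p1 i = a'"
      show "kidx n1 p1 i < ?nv a'"
      proof (cases "i = L")
        case True then show ?thesis using LP i by (simp add: unitv_def)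
      next
        case False then have "i < l" using i unfolding I_def by simp
        then show ?thesis using kidx_lt_nuv[OF comp1, of i l] i by simp
      qed
    qed
  qed
  have coeffPa: "coeff (P a) (nuv n1 p1 l a) = 1"
  proof -
    have S: "{i\<in>I. aidx n1 p1 i = a} = insert L {i\<in>{..<l}. aidx n1 p1 i = a}"
      unfolding I_def using LP by auto
    have "coeff (P a) (nuv n1 p1 l a) = c L + (\<Sum>i\<in>{i\<in>{..<l}. aidx n1 p1 i = a}. if kidx n1 p1 i = nuv n1 p1 l a then c i else 0)"
      unfolding P_def coeff_polysS_gen S using LI LP by simp
    also have "(\<Sum>i\<in>{i\<in>{..<l}. aidx n1 p1 i = a}. if kidx n1 p1 i = nuv n1 p1 l a then c i else 0) = 0"
    proof (rule sum.neutral, intro ballI)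
      fix i assume "i \<in> {i\<in>{..<l}. aidx n1 p1 i = a}"
      then have "kidx n1 p1 i < nuv n1 p1 l a" using kidx_lt_nuv[OF comp1, of i l] by auto
      then show "(if kidx n1 p1 i = nuv n1 p1 l a then c i else 0) = 0" by simp
    qed
    finally show ?thesis by (simp add: c_def)
  qed
  have degPa: "degree (P a) = nuv n1 p1 l a"
  proof (rule degree_eqI')
    show "coeff (P a) (nuv n1 p1 l a) \<noteq> 0" using coeffPa by simp
    show "\<forall>k>nuv n1 p1 l a. coeff (P a) k = 0" using bndP[of a] by (simp add: unitv_def)
  qed
  have leadPa: "lead_coeff (P a) = 1" using coeffPa degPa by simp
  have orthP: "\<forall>b<p2. \<forall>k<nuv n2 p2 l b. mint \<sigma> M (\<lambda>x. linform p1 w1 P x * w2 b x * x ^ k) = 0"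
  proof (intro allI impI)
    fix b k assume b: "b < p2" and k: "k < nuv n2 p2 l b"
    obtain j where j: "j < l" "aidx n2 p2 j = b" "kidx n2 p2 j = k"
      using kidx_surj[OF comp2 k] by blast
    have "mint \<sigma> M (\<lambda>x. linform p1 w1 P x * w2 b x * x ^ k) = (\<Sum>i\<in>I. c i * GG i j)"
      unfolding P_def linform_polysS[OF comp1 fI] using int_sum[OF fI, of c j] j by simp
    also have "\<dots> = GG L j + (\<Sum>i<l. d i * GG i j)"
      unfolding I_def using LI cd by (simp add: c_def)
    also have "(\<Sum>i<l. d i * GG i j) = - (\<Sum>t<l. GG L t * (\<Sum>i<l. B $$ (t, i) * GG i j))"
    proof -
      have "(\<Sum>i<l. d i * GG i j) = - (\<Sum>i<l. \<Sum>t<l. GG L t * B $$ (t, i) * GG i j)"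
        unfolding d_def by (simp add: sum_distrib_right sum_negf)
      also have "(\<Sum>i<l. \<Sum>t<l. GG L t * B $$ (t, i) * GG i j) = (\<Sum>t<l. \<Sum>i<l. GG L t * B $$ (t, i) * GG i j)"
        by (rule sum.swap)
      also have "\<dots> = (\<Sum>t<l. GG L t * (\<Sum>i<l. B $$ (t, i) * GG i j))"
        by (simp add: sum_distrib_left mult.assoc)
      finally show ?thesis .
    qed
    also have "(\<Sum>t<l. GG L t * (\<Sum>i<l. B $$ (t, i) * GG i j)) = (\<Sum>t<l. GG L t * (if t = j then 1 else 0))"
      using ginv_id(1)[of l] j(1) unfolding B_def by (intro sum.cong refl) simp
    also have "\<dots> = GG L j" using sum_delta_r[OF j(1)] .
    finally show "mint \<sigma> M (\<lambda>x. linform p1 w1 P x * w2 b x * x ^ k) = 0" by simp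
  qed
  have tII: "typeII \<sigma> M p1 w1 p2 w2 ?nv a (nuv n2 p2 l) P"
    unfolding typeII_def using bndP leadPa degPa orthP
    by (auto simp: unitv_def intro: bnd_degree)
  have un: "\<forall>a'<p1. R a' = P a'" if R: "typeII \<sigma> M p1 w1 p2 w2 ?nv a (nuv n2 p2 l) R" for R
  proof -
    let ?D = "\<lambda>a'. R a' - P a'"
    have bndD: "\<forall>a'<p1. \<forall>k\<ge>nuv n1 p1 l a'. coeff (?D a') k = 0"
    proof (intro allI impI)
      fix a' k assume a': "a' < p1" and k: "nuv n1 p1 l a' \<le> k"
      show "coeff (?D a') k = 0"
      proof (cases "a' = a")
        case True
        have "\<forall>k\<ge>nuv n1 p1 l a. coeff (R a - P a) k = 0"
          by (rule diff_monic_bnd) (use R leadPa degPa in \<open>auto simp: typeII_def unitv_def\<close>)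
        then show ?thesis using True k by simp
      next
        case False
        have "\<forall>k\<ge>?nv a'. coeff (R a') k = 0" using R a' unfolding typeII_def by (intro degree_bnd) simp
        then show ?thesis using False k bndP[of a'] by (simp add: unitv_def)
      qed
    qed
    have orthD: "\<forall>b<p2. \<forall>k<nuv n2 p2 l b. mint \<sigma> M (\<lambda>x. linform p1 w1 ?D x * w2 b x * x ^ k) = 0"
      using R orthP linform_mint_diff unfolding typeII_def by simp
    have "\<forall>a'<p1. ?D a' = 0" by (rule uniq[OF bndD orthD])
    then show ?thesis by simp
  qed
  show ?thesis using polyP tII un by blast
qed

lemma part2:
  assumes b: "b < p2" and ex: "\<exists>m\<le>l. aidx n2 p2 m = b"
  shows "\<exists>P. (\<forall>a'<p1. poly (P a') = Aminus GG n1 p1 n2 p2 l b a')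
        \<and> typeI \<sigma> M p1 w1 p2 w2 (nuv n1 p1 (Suc l)) (nuv n2 p2 (Suc l)) b P
        \<and> (\<forall>R. typeI \<sigma> M p1 w1 p2 w2 (nuv n1 p1 (Suc l)) (nuv n2 p2 (Suc l)) b R
               \<longrightarrow> (\<forall>a'<p1. R a' = P a'))"
proof -
  define Lb where "Lb = lminus n2 p2 l b"
  have LP: "Lb \<le> l" "aidx n2 p2 Lb = b" "kidx n2 p2 Lb = nuv n2 p2 (Suc l) b - 1"
    using lminus_props[OF ex] lminus_kidx[OF comp2 ex] unfolding Lb_def by auto
  define B where "B = ginv GG (Suc l)"
  define c where "c i = B $$ (Lb, i)" for i
  define P where "P = polysS n1 p1 c {..<Suc l}"
  have polyP: "poly (P a') = Aminus GG n1 p1 n2 p2 l b a'" for a'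
    by (rule ext) (simp add: P_def poly_polysS Aminus_def c_def B_def Lb_def)
  have bndP: "\<forall>k\<ge>nuv n1 p1 (Suc l) a'. coeff (P a') k = 0" for a'
    unfolding P_def using kidx_lt_nuv[OF comp1] by (intro allI impI coeff_polysS_zero) auto
  have orthP: "\<forall>b'<p2. \<forall>k<nuv n2 p2 (Suc l) b'. mint \<sigma> M (\<lambda>x. linform p1 w1 P x * w2 b' x * x ^ k)
         = (if b' = b \<and> k = nuv n2 p2 (Suc l) b - 1 then 1 else 0)"
  proof (intro allI impI)
    fix b' k assume b': "b' < p2" and k: "k < nuv n2 p2 (Suc l) b'"
    obtain j where j: "j < Suc l" "aidx n2 p2 j = b'" "kidx n2 p2 j = k"
      using kidx_surj[OF comp2 k] by blast
    have "mint \<sigma> M (\<lambda>x. linform p1 w1 P x * w2 b' x * x ^ k) = (\<Sum>i<Suc l. c i * GG i j)"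
      unfolding P_def linform_polysS[OF comp1 finite_lessThan] using int_sum[of "{..<Suc l}" c j] j by (simp del: lessThan_Suc)
    also have "\<dots> = (if Lb = j then 1 else 0)"
      using ginv_id(1)[of "Suc l"] j(1) LP(1) unfolding c_def B_def by simp
    also have "\<dots> = (if b' = b \<and> k = nuv n2 p2 (Suc l) b - 1 then 1 else 0)"
    proof (cases "Lb = j")
      case True then show ?thesis using LP j by simp
    next
      case False
      have "\<not> (b' = b \<and> k = nuv n2 p2 (Suc l) b - 1)"
      proof
        assume h: "b' = b \<and> k = nuv n2 p2 (Suc l) b - 1"
        have inj: "inj_on (kidx n2 p2) {i. i < Suc l \<and> aidx n2 p2 i = b}"
          using kidx_bij[OF comp2] by (auto simp: bij_betw_def)
        have "j = Lb" using inj_onD[OF inj, of j Lb] h j LP by simp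
        then show False using False by simp
      qed
      then show ?thesis using False by simp
    qed
    finally show "mint \<sigma> M (\<lambda>x. linform p1 w1 P x * w2 b' x * x ^ k)
         = (if b' = b \<and> k = nuv n2 p2 (Suc l) b - 1 then 1 else 0)" .
  qed
  have tI: "typeI \<sigma> M p1 w1 p2 w2 (nuv n1 p1 (Suc l)) (nuv n2 p2 (Suc l)) b P"
    unfolding typeI_def using bndP orthP by (auto intro: bnd_degree)
  have un: "\<forall>a'<p1. R a' = P a'" if R: "typeI \<sigma> M p1 w1 p2 w2 (nuv n1 p1 (Suc l)) (nuv n2 p2 (Suc l)) b R" for R
  proof -
    let ?D = "\<lambda>a'. R a' - P a'"
    have bndD: "\<forall>a'<p1. \<forall>k\<ge>nuv n1 p1 (Suc l) a'. coeff (?D a') k = 0"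
    proof (intro allI impI)
      fix a' k assume a': "a' < p1" and k: "nuv n1 p1 (Suc l) a' \<le> k"
      have "\<forall>k\<ge>nuv n1 p1 (Suc l) a'. coeff (R a') k = 0" using R a' unfolding typeI_def by (intro degree_bnd) simp
      then show "coeff (?D a') k = 0" using k bndP[of a'] by simp
    qed
    have orthD: "\<forall>b'<p2. \<forall>k<nuv n2 p2 (Suc l) b'. mint \<sigma> M (\<lambda>x. linform p1 w1 ?D x * w2 b' x * x ^ k) = 0"
      using R orthP linform_mint_diff unfolding typeI_def by simp
    have "\<forall>a'<p1. ?D a' = 0" by (rule uniq[OF bndD orthD])
    then show ?thesis by simp
  qed
  show ?thesis using polyP tI un by blast
qed

end




lemma gmom_swap: "gmom \<sigma> M n2 p2 n1 p1 w2 w1 i j = gmom \<sigma> M n1 p1 n2 p2 w1 w2 j i"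
  unfolding gmom_def by (simp add: add.commute mult_ac)

lemma (in mmo0) perfect_nonsing:
  assumes perf: "perfect \<sigma> M p1 w1 p2 w2"
  shows "\<forall>L c. (\<forall>j<L. (\<Sum>i<L. c i * GG i j) = 0) \<longrightarrow> (\<forall>i<L. c i = 0)"
proof (rule allI, rule allI, rule impI)
  fix L c assume h: "\<forall>j<L. (\<Sum>i<L. c i * GG i j) = 0"
  show "\<forall>i<L. c i = 0"
  proof (rule ccontr)
    assume "\<not> (\<forall>i<L. c i = 0)"
    then obtain i0 where i0: "i0 < L" "c i0 \<noteq> 0" by blast
    define A where "A = polysS n1 p1 c {..<L}"
    define \<nu>1 where "\<nu>1 a = nuv n1 p1 L a + unitv 0 a" for a
    define \<nu>2 where "\<nu>2 = nuv n2 p2 L"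
    have p1: "0 < p1" using comp1 by (simp add: composition_def)
    have bndA: "\<forall>k\<ge>nuv n1 p1 L a. coeff (A a) k = 0" for a
      unfolding A_def using kidx_lt_nuv[OF comp1] by (intro allI impI coeff_polysS_zero) auto
    have s1: "(\<Sum>a<p1. unitv 0 a) = (1::nat)" using p1 by (simp add: unitv_def)
    have sum: "(\<Sum>a<p1. \<nu>1 a) = (\<Sum>b<p2. \<nu>2 b) + 1"
      unfolding \<nu>1_def \<nu>2_def sum.distrib sum_nuv[OF comp1] sum_nuv[OF comp2] s1 by simp
    have nz: "\<exists>a<p1. A a \<noteq> 0"
    proof (intro exI conjI)
      show "aidx n1 p1 i0 < p1" using aidx_lt[OF comp1] .
      have "coeff (A (aidx n1 p1 i0)) (kidx n1 p1 i0) = c i0" unfolding A_def by (rule coeff_polysS[OF comp1 i0(1)])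
      then show "A (aidx n1 p1 i0) \<noteq> 0" using i0 by auto
    qed
    have deg: "\<forall>a<p1. A a \<noteq> 0 \<longrightarrow> degree (A a) < \<nu>1 a"
    proof (intro allI impI)
      fix a assume "a < p1" "A a \<noteq> 0"
      then have "degree (A a) < nuv n1 p1 L a" using bnd_degree[OF bndA] by blast
      then show "degree (A a) < \<nu>1 a" unfolding \<nu>1_def by simp
    qed
    have orth: "\<forall>b<p2. \<forall>j<\<nu>2 b. mint \<sigma> M (\<lambda>x. linform p1 w1 A x * w2 b x * x ^ j) = 0"
    proof (intro allI impI)
      fix b k assume b: "b < p2" and k: "k < \<nu>2 b"
      obtain j where j: "j < L" "aidx n2 p2 j = b" "kidx n2 p2 j = k"
        using kidx_surj[OF comp2 k[unfolded \<nu>2_def]] by blast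
      have "mint \<sigma> M (\<lambda>x. linform p1 w1 A x * w2 b x * x ^ k) = (\<Sum>i<L. c i * GG i j)"
        unfolding A_def linform_polysS[OF comp1 finite_lessThan] using int_sum[of "{..<L}" c j] j by simp
      then show "mint \<sigma> M (\<lambda>x. linform p1 w1 A x * w2 b x * x ^ k) = 0" using h j by simp
    qed
    have "\<forall>a<p1. 0 < \<nu>1 a \<longrightarrow> A a \<noteq> 0 \<and> degree (A a) = \<nu>1 a - 1"
      using spec[OF spec[OF spec[OF perf[unfolded perfect_def], of \<nu>1], of \<nu>2], of A] sum nz deg orth
      by blast
    then have "degree (A 0) = nuv n1 p1 L 0" and "A 0 \<noteq> 0" using p1 by (auto simp: \<nu>1_def unitv_def)
    moreover have "degree (A 0) < nuv n1 p1 L 0" using bnd_degree[OF bndA] \<open>A 0 \<noteq> 0\<close> by blast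
    ultimately show False by simp
  qed
qed

theorem proposition2p20:
  fixes M :: "real measure" and \<sigma> :: real and \<Delta> :: "real set"
    and p1 p2 :: nat and n1 n2 :: "nat \<Rightarrow> nat"
    and w1 w2 :: "nat \<Rightarrow> real \<Rightarrow> real" and l :: nat
  defines "G \<equiv> gmom \<sigma> M n1 p1 n2 p2 w1 w2"
  assumes fin: "finite_measure M" and borel: "sets M = sets borel"
    and sgn: "\<sigma> = 1 \<or> \<sigma> = -1"
    and intv: "is_interval \<Delta>" and conc: "AE x in M. x \<in> \<Delta>"
    and supp: "infinite (msupport M)"
    and w1: "\<forall>a<p1. integrable M (w1 a) \<and> sign_definite M (w1 a)"
    and w2: "\<forall>b<p2. integrable M (w2 b) \<and> sign_definite M (w2 b)"
    and moments: "\<forall>a<p1. \<forall>b<p2. \<forall>k. integrable M (\<lambda>x. x ^ k * w1 a x * w2 b x)"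
    and comp1: "composition n1 p1" and comp2: "composition n2 p2"
    and perf: "perfect \<sigma> M p1 w1 p2 w2"
  shows
   "(\<forall>a<p1. \<exists>P. (\<forall>a'<p1. poly (P a') = Aplus G n1 p1 l a a')
        \<and> typeII \<sigma> M p1 w1 p2 w2 (\<lambda>a'. nuv n1 p1 l a' + unitv a a') a (nuv n2 p2 l) P
        \<and> (\<forall>R. typeII \<sigma> M p1 w1 p2 w2 (\<lambda>a'. nuv n1 p1 l a' + unitv a a') a (nuv n2 p2 l) R
               \<longrightarrow> (\<forall>a'<p1. R a' = P a'))) \<and>
    (\<forall>b<p2. (\<exists>m\<le>l. aidx n2 p2 m = b) \<longrightarrow>
      (\<exists>P. (\<forall>a'<p1. poly (P a') = Aminus G n1 p1 n2 p2 l b a')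
        \<and> typeI \<sigma> M p1 w1 p2 w2 (nuv n1 p1 (Suc l)) (nuv n2 p2 (Suc l)) b P
        \<and> (\<forall>R. typeI \<sigma> M p1 w1 p2 w2 (nuv n1 p1 (Suc l)) (nuv n2 p2 (Suc l)) b R
               \<longrightarrow> (\<forall>a'<p1. R a' = P a')))) \<and>
    (\<forall>b<p2. \<exists>P. (\<forall>b'<p2. poly (P b') = Abarplus G n2 p2 l b b')
        \<and> typeII \<sigma> M p2 w2 p1 w1 (\<lambda>b'. nuv n2 p2 l b' + unitv b b') b (nuv n1 p1 l) P
        \<and> (\<forall>R. typeII \<sigma> M p2 w2 p1 w1 (\<lambda>b'. nuv n2 p2 l b' + unitv b b') b (nuv n1 p1 l) R
               \<longrightarrow> (\<forall>b'<p2. R b' = P b'))) \<and>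
    (\<forall>a<p1. (\<exists>m\<le>l. aidx n1 p1 m = a) \<longrightarrow>
      (\<exists>P. (\<forall>b'<p2. poly (P b') = Abarminus G n1 p1 n2 p2 l a b')
        \<and> typeI \<sigma> M p2 w2 p1 w1 (nuv n2 p2 (Suc l)) (nuv n1 p1 (Suc l)) a P
        \<and> (\<forall>R. typeI \<sigma> M p2 w2 p1 w1 (nuv n2 p2 (Suc l)) (nuv n1 p1 (Suc l)) a R
               \<longrightarrow> (\<forall>b'<p2. R b' = P b'))))"
proof -
  interpret A0: mmo0 \<sigma> M n1 p1 n2 p2 w1 w2
    using comp1 comp2 moments by unfold_locales auto
  have ns1: "\<forall>L c. (\<forall>j<L. (\<Sum>i<L. c i * G i j) = 0) \<longrightarrow> (\<forall>i<L. c i = 0)"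
    using A0.perfect_nonsing[OF perf] unfolding G_def .
  interpret A: mmo \<sigma> M n1 p1 n2 p2 w1 w2
    using ns1 unfolding G_def by unfold_locales
  let ?G' = "gmom \<sigma> M n2 p2 n1 p1 w2 w1"
  have G': "?G' i j = G j i" for i j unfolding G_def by (rule gmom_swap)
  have ns2: "\<forall>L c. (\<forall>j<L. (\<Sum>i<L. c i * ?G' i j) = 0) \<longrightarrow> (\<forall>i<L. c i = 0)"
  proof (rule allI, rule allI, rule impI)
    fix L c assume h: "\<forall>j<L. (\<Sum>i<L. c i * ?G' i j) = 0"
    show "\<forall>i<L. c i = 0"
    proof (intro allI impI)
      fix k assume k: "k < L"
      have "c k = (\<Sum>i<L. (if k = i then 1 else 0) * c i)" using sum_delta_l[OF k] by simp
      also have "\<dots> = (\<Sum>i<L. (\<Sum>j<L. ginv G L $$ (k,j) * G j i) * c i)"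
        using A.ginv_id(1)[of L] k unfolding G_def by (intro sum.cong refl) simp
      also have "\<dots> = (\<Sum>i<L. \<Sum>j<L. ginv G L $$ (k,j) * G j i * c i)"
        by (simp add: sum_distrib_right)
      also have "\<dots> = (\<Sum>i<L. \<Sum>j<L. ginv G L $$ (k,j) * (c i * ?G' i j))"
        by (simp add: G' mult_ac)
      also have "\<dots> = (\<Sum>j<L. \<Sum>i<L. ginv G L $$ (k,j) * (c i * ?G' i j))" by (rule sum.swap)
      also have "\<dots> = (\<Sum>j<L. ginv G L $$ (k,j) * (\<Sum>i<L. c i * ?G' i j))"
        by (simp add: sum_distrib_left)
      also have "\<dots> = 0" using h by simp
      finally show "c k = 0" .
    qed
  qed
  interpret B: mmo \<sigma> M n2 p2 n1 p1 w2 w1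
    using comp1 comp2 moments ns2 by unfold_locales (auto simp: mult_ac)
  have tr: "ginv ?G' L $$ (i,j) = ginv G L $$ (j,i)" if "i < L" "j < L" for L i j
  proof (rule inv_unique[of L "\<lambda>i j. ginv ?G' L $$ (i,j)" ?G' "\<lambda>i j. ginv G L $$ (j,i)"])
    show "\<forall>i<L. \<forall>k<L. (\<Sum>t<L. ginv ?G' L $$ (i, t) * ?G' t k) = (if i = k then 1 else 0)"
      using B.ginv_id(1) .
    show "\<forall>i<L. \<forall>k<L. (\<Sum>t<L. ?G' i t * ginv G L $$ (k, t)) = (if i = k then 1 else 0)"
    proof (intro allI impI)
      fix i k assume ik: "i < L" "k < L"
      have "(\<Sum>t<L. ?G' i t * ginv G L $$ (k, t)) = (\<Sum>t<L. ginv G L $$ (k, t) * G t i)"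
        by (simp add: G' mult.commute)
      also have "\<dots> = (if k = i then 1 else 0)" using A.ginv_id(1)[of L] ik unfolding G_def by simp
      finally show "(\<Sum>t<L. ?G' i t * ginv G L $$ (k, t)) = (if i = k then 1 else 0)" by auto
    qed
  qed (use that in auto)
  have P1: "\<forall>a<p1. \<exists>P. (\<forall>a'<p1. poly (P a') = Aplus G n1 p1 l a a')
        \<and> typeII \<sigma> M p1 w1 p2 w2 (\<lambda>a'. nuv n1 p1 l a' + unitv a a') a (nuv n2 p2 l) P
        \<and> (\<forall>R. typeII \<sigma> M p1 w1 p2 w2 (\<lambda>a'. nuv n1 p1 l a' + unitv a a') a (nuv n2 p2 l) R
               \<longrightarrow> (\<forall>a'<p1. R a' = P a'))"
    unfolding G_def using A.part1 by (intro allI impI) assumption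
  have P2: "\<forall>b<p2. (\<exists>m\<le>l. aidx n2 p2 m = b) \<longrightarrow>
      (\<exists>P. (\<forall>a'<p1. poly (P a') = Aminus G n1 p1 n2 p2 l b a')
        \<and> typeI \<sigma> M p1 w1 p2 w2 (nuv n1 p1 (Suc l)) (nuv n2 p2 (Suc l)) b P
        \<and> (\<forall>R. typeI \<sigma> M p1 w1 p2 w2 (nuv n1 p1 (Suc l)) (nuv n2 p2 (Suc l)) b R
               \<longrightarrow> (\<forall>a'<p1. R a' = P a')))"
    unfolding G_def using A.part2 by (intro allI impI)
  have e3: "Aplus ?G' n2 p2 l b b' = Abarplus G n2 p2 l b b'" for b b'
  proof (rule ext)
    fix x
    have "(\<Sum>i<l. \<Sum>j<l. ?G' (lplus n2 p2 l b) j * ginv ?G' l $$ (j, i) * chi n2 p2 b' x i)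
        = (\<Sum>i<l. \<Sum>j<l. chi n2 p2 b' x i * ginv G l $$ (i, j) * G j (lplus n2 p2 l b))"
      by (intro sum.cong refl) (simp add: G' tr mult_ac)
    then show "Aplus ?G' n2 p2 l b b' x = Abarplus G n2 p2 l b b' x"
      unfolding Aplus_def Abarplus_def by simp
  qed
  have P3: "\<forall>b<p2. \<exists>P. (\<forall>b'<p2. poly (P b') = Abarplus G n2 p2 l b b')
        \<and> typeII \<sigma> M p2 w2 p1 w1 (\<lambda>b'. nuv n2 p2 l b' + unitv b b') b (nuv n1 p1 l) P
        \<and> (\<forall>R. typeII \<sigma> M p2 w2 p1 w1 (\<lambda>b'. nuv n2 p2 l b' + unitv b b') b (nuv n1 p1 l) R
               \<longrightarrow> (\<forall>b'<p2. R b' = P b'))"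
    unfolding e3[symmetric] using B.part1 by (intro allI impI)
  have e4: "Aminus ?G' n2 p2 n1 p1 l a b' = Abarminus G n1 p1 n2 p2 l a b'"
    if ex: "\<exists>m\<le>l. aidx n1 p1 m = a" for a b'
  proof (rule ext)
    fix x
    have La: "lminus n1 p1 l a < Suc l" using lminus_props[OF ex] by simp
    show "Aminus ?G' n2 p2 n1 p1 l a b' x = Abarminus G n1 p1 n2 p2 l a b' x"
      unfolding Aminus_def Abarminus_def
      by (intro sum.cong refl) (simp add: tr[OF La] mult.commute)
  qed
  have P4: "\<forall>a<p1. (\<exists>m\<le>l. aidx n1 p1 m = a) \<longrightarrow>
      (\<exists>P. (\<forall>b'<p2. poly (P b') = Abarminus G n1 p1 n2 p2 l a b')
        \<and> typeI \<sigma> M p2 w2 p1 w1 (nuv n2 p2 (Suc l)) (nuv n1 p1 (Suc l)) a P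
        \<and> (\<forall>R. typeI \<sigma> M p2 w2 p1 w1 (nuv n2 p2 (Suc l)) (nuv n1 p1 (Suc l)) a R
               \<longrightarrow> (\<forall>b'<p2. R b' = P b')))"
  proof (intro allI impI)
    fix a assume a: "a < p1" and ex: "\<exists>m\<le>l. aidx n1 p1 m = a"
    show "\<exists>P. (\<forall>b'<p2. poly (P b') = Abarminus G n1 p1 n2 p2 l a b')
        \<and> typeI \<sigma> M p2 w2 p1 w1 (nuv n2 p2 (Suc l)) (nuv n1 p1 (Suc l)) a P
        \<and> (\<forall>R. typeI \<sigma> M p2 w2 p1 w1 (nuv n2 p2 (Suc l)) (nuv n1 p1 (Suc l)) a R
               \<longrightarrow> (\<forall>b'<p2. R b' = P b'))"
      using B.part2[OF a ex] e4[OF ex] by simp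
  qed
  show ?thesis by (rule conjI[OF P1 conjI[OF P2 conjI[OF P3 P4]]])
qed


end
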